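(* Let $G=(V,E)$ be a graph with $|V|>4$ and let $v\in V$ be a 1-separator (cut vertex) of $G$. Let $A_1,\ldots,A_\ell$ be the connected components of $G-\{v\}$. Then there is an $i\in\{1,\ldots,\ell\}$ such that $\delta(G)=\delta(G-V(A_i))$.
   Context: For a graph $G=(V,E)$, $\mathrm{dist}(x,y)$ denotes the length of a shortest $x$-$y$ path ($\infty$ if none exists). For $a,b,c,d\in V$ let $D_1=\mathrm{dist}(a,b)+\mathrm{dist}(c,d)$, $D_2=\mathrm{dist}(a,c)+\mathrm{dist}(b,d)$, $D_3=\mathrm{dist}(a,d)+\mathrm{dist}(b,c)$, and define $\delta(a,b,c,d)=|D_i-D_j|$ where $\{i,j,k\}=\{1,2,3\}$ and $D_k\le\min\{D_i,D_j\}$. The hyperbolicity of $G$ is $\delta(G)=\max_{a,b,c,d\in V}\delta(a,b,c,d)$. $G-W$ denotes the graph obtained by deleting the vertices in $W$; a 1-separator is a vertex whose deletion increases the number of connected components. *)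

theory Defs
  imports Main "HOL-Library.Extended_Nat"
begin

text \<open>Walks only use vertices of V, so deleting vertices W is modelled by
passing the vertex set V - W together with the same E.\<close>

definition graph :: "'a set \<Rightarrow> ('a \<times> 'a) set \<Rightarrow> bool" where
  "graph V E \<longleftrightarrow> finite V \<and> E \<subseteq> V \<times> V \<and> sym E \<and> irrefl E"

definition walk :: "'a set \<Rightarrow> ('a \<times> 'a) set \<Rightarrow> 'a list \<Rightarrow> bool" where
  "walk V E p \<longleftrightarrow> p \<noteq> [] \<and> set p \<subseteq> V \<and>
     (\<forall>i. Suc i < length p \<longrightarrow> (p ! i, p ! Suc i) \<in> E)"

text \<open>Shortest path length; infinity if no path exists (Inf of empty set).\<close>
definition gdist :: "'a set \<Rightarrow> ('a \<times> 'a) set \<Rightarrow> 'a \<Rightarrow> 'a \<Rightarrow> enat" where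
  "gdist V E x y = (INF p \<in> {p. walk V E p \<and> hd p = x \<and> last p = y}. enat (length p - 1))"

text \<open>Absolute difference in enat; the case \<infinity> - \<infinity> is taken to be 0.\<close>
definition enat_absdiff :: "enat \<Rightarrow> enat \<Rightarrow> enat" where
  "enat_absdiff a b = (if a = b then 0 else max a b - min a b)"

definition delta4 :: "'a set \<Rightarrow> ('a \<times> 'a) set \<Rightarrow> 'a \<Rightarrow> 'a \<Rightarrow> 'a \<Rightarrow> 'a \<Rightarrow> enat" where
  "delta4 V E a b c d =
    (let D1 = gdist V E a b + gdist V E c d;
         D2 = gdist V E a c + gdist V E b d;
         D3 = gdist V E a d + gdist V E b c
     in if D1 \<le> min D2 D3 then enat_absdiff D2 D3
        else if D2 \<le> min D1 D3 then enat_absdiff D1 D3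
        else enat_absdiff D1 D2)"

definition hyperbolicity :: "'a set \<Rightarrow> ('a \<times> 'a) set \<Rightarrow> enat" where
  "hyperbolicity V E = (SUP q \<in> V \<times> V \<times> V \<times> V.
      (case q of (a, b, c, d) \<Rightarrow> delta4 V E a b c d))"

definition reachable :: "'a set \<Rightarrow> ('a \<times> 'a) set \<Rightarrow> 'a \<Rightarrow> 'a \<Rightarrow> bool" where
  "reachable V E x y \<longleftrightarrow> (\<exists>p. walk V E p \<and> hd p = x \<and> last p = y)"

definition components :: "'a set \<Rightarrow> ('a \<times> 'a) set \<Rightarrow> 'a set set" where
  "components V E = {C. \<exists>x\<in>V. C = {y. reachable V E x y}}"

definition cut_vertex :: "'a set \<Rightarrow> ('a \<times> 'a) set \<Rightarrow> 'a \<Rightarrow> bool" where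
  "cut_vertex V E v \<longleftrightarrow> v \<in> V \<and> card (components (V - {v}) E) > card (components V E)"

end

theory Submission
  imports Defs
begin

lemma walk_succ: "walk V E p \<longleftrightarrow> p \<noteq> [] \<and> set p \<subseteq> V \<and> successively (\<lambda>x y. (x,y) \<in> E) p"
  unfolding walk_def successively_conv_nth by auto

lemma walk_rev: "sym E \<Longrightarrow> walk V E p \<Longrightarrow> walk V E (rev p)"
  unfolding walk_succ by (auto elim!: successively_mono dest: symD)

lemma walk_app: "walk V E p \<Longrightarrow> walk V E q \<Longrightarrow> (last p, hd q) \<in> E \<Longrightarrow> walk V E (p @ q)"
  unfolding walk_succ by (auto simp: successively_append_iff)

lemma walk_appD: "walk V E (p @ q) \<Longrightarrow> p \<noteq> [] \<Longrightarrow> walk V E p"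
  "walk V E (p @ q) \<Longrightarrow> q \<noteq> [] \<Longrightarrow> walk V E q"
  unfolding walk_succ by (auto simp: successively_append_iff)

lemma walk_join: "walk V E p \<Longrightarrow> walk V E q \<Longrightarrow> last p = hd q \<Longrightarrow> walk V E (p @ tl q)"
  unfolding walk_succ by (cases q) (auto simp: successively_append_iff successively_Cons)

lemma walk_single: "x \<in> V \<Longrightarrow> walk V E [x]" unfolding walk_def by auto

lemma walk_mono: "walk W E p \<Longrightarrow> W \<subseteq> V \<Longrightarrow> walk V E p" unfolding walk_def by auto

lemma gdist_le: "walk V E p \<Longrightarrow> hd p = x \<Longrightarrow> last p = y \<Longrightarrow> gdist V E x y \<le> enat (length p - 1)"
  unfolding gdist_def by (rule INF_lower) auto

lemma gdist_ge: "(\<And>p. walk V E p \<Longrightarrow> hd p = x \<Longrightarrow> last p = y \<Longrightarrow> t \<le> enat (length p - 1)) \<Longrightarrow> t \<le> gdist V E x y"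
  unfolding gdist_def by (rule INF_greatest) auto

lemma gdist_attained: assumes "gdist V E x y \<noteq> \<infinity>"
  shows "\<exists>p. walk V E p \<and> hd p = x \<and> last p = y \<and> gdist V E x y = enat (length p - 1)"
proof -
  define P where "P = {p. walk V E p \<and> hd p = x \<and> last p = y}"
  define S where "S = (\<lambda>p. enat (length p - 1)) ` P"
  have g: "gdist V E x y = Inf S" unfolding gdist_def S_def P_def by simp
  have "S \<noteq> {}"
  proof
    assume "S = {}" then have "Inf S = \<infinity>" by (simp add: Inf_enat_def)
    with g assms show False by simp
  qed
  then obtain s where "s \<in> S" by blast
  hence "(LEAST z. z \<in> S) \<in> S" by (rule LeastI)
  hence "Inf S \<in> S" using \<open>S \<noteq> {}\<close> by (simp add: Inf_enat_def)
  then obtain p where "p \<in> P" "Inf S = enat (length p - 1)" unfolding S_def by blast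
  thus ?thesis using g unfolding P_def by auto
qed

lemma gdist_sym: assumes "sym E" shows "gdist V E x y = gdist V E y x"
proof -
  have *: "gdist V E a b \<le> gdist V E b a" for a b
  proof (rule gdist_ge)
    fix p assume "walk V E p" "hd p = b" "last p = a"
    thus "gdist V E a b \<le> enat (length p - 1)"
      using gdist_le[OF walk_rev[OF assms], of V p] by (simp add: hd_rev last_rev)
  qed
  show ?thesis using *[of x y] *[of y x] by simp
qed

lemma gdist_tri: "gdist V E x z \<le> gdist V E x y + gdist V E y z"
proof (cases "gdist V E x y = \<infinity> \<or> gdist V E y z = \<infinity>")
  case True thus ?thesis by auto
next
  case False
  then obtain p where p: "walk V E p" "hd p = x" "last p = y" "gdist V E x y = enat (length p - 1)"
    using gdist_attained[of V E x y] by auto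
  obtain q where q: "walk V E q" "hd q = y" "last q = z" "gdist V E y z = enat (length q - 1)"
    using gdist_attained[of V E y z] False by auto
  have w: "walk V E (p @ tl q)" using walk_join p q by metis
  have ne: "p \<noteq> []" "q \<noteq> []" using p(1) q(1) unfolding walk_def by auto
  have hl: "hd (p @ tl q) = x" "last (p @ tl q) = z" using p q ne
    by (cases q; auto simp: hd_append last_append)+
  have "gdist V E x z \<le> enat (length (p @ tl q) - 1)" by (rule gdist_le[OF w hl])
  also have "length (p @ tl q) - 1 = (length p - 1) + (length q - 1)" using ne by (cases p; cases q) auto
  hence "enat (length (p @ tl q) - 1) = gdist V E x y + gdist V E y z" using p(4) q(4) by simp
  finally show ?thesis .
qed

lemma gdist_refl: "x \<in> V \<Longrightarrow> gdist V E x x = 0"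
  using gdist_le[OF walk_single[of x V E]] by (simp add: zero_enat_def[symmetric])

lemma reach_walk: "reachable W E x y \<longleftrightarrow> (\<exists>p. walk W E p \<and> hd p = x \<and> last p = y)"
  unfolding reachable_def by simp

lemma reach_in: "reachable W E x y \<Longrightarrow> x \<in> W \<and> y \<in> W"
proof -
  assume "reachable W E x y"
  then obtain p where "walk W E p" "hd p = x" "last p = y" unfolding reachable_def by blast
  thus ?thesis unfolding walk_def using hd_in_set last_in_set by blast
qed

lemma reach_refl: "x \<in> W \<Longrightarrow> reachable W E x x"
  unfolding reachable_def using walk_single by fastforce

lemma reach_sym: "sym E \<Longrightarrow> reachable W E x y \<Longrightarrow> reachable W E y x"
proof -
  assume s: "sym E" and "reachable W E x y"
  then obtain p where p: "walk W E p" "hd p = x" "last p = y" unfolding reachable_def by blast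
  have "walk W E (rev p)" by (rule walk_rev[OF s p(1)])
  moreover have "hd (rev p) = y" "last (rev p) = x" using p by (simp_all add: hd_rev last_rev)
  ultimately show ?thesis unfolding reachable_def by blast
qed

lemma reach_trans: "reachable W E x y \<Longrightarrow> reachable W E y z \<Longrightarrow> reachable W E x z"
proof -
  assume "reachable W E x y" "reachable W E y z"
  then obtain p q where p: "walk W E p" "hd p = x" "last p = y" and q: "walk W E q" "hd q = y" "last q = z"
    unfolding reachable_def by blast
  have ne: "p \<noteq> []" "q \<noteq> []" using p(1) q(1) unfolding walk_def by auto
  have "walk W E (p @ tl q)" using walk_join p q by metis
  moreover have "hd (p @ tl q) = x" "last (p @ tl q) = z" using p q ne
    by (cases q; auto simp: hd_append last_append)+
  ultimately show ?thesis unfolding reachable_def by blast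
qed

lemma comp_sub: "A \<in> components W E \<Longrightarrow> A \<subseteq> W"
proof
  fix y assume "A \<in> components W E" "y \<in> A"
  then obtain x where "x \<in> W" "A = {y. reachable W E x y}" unfolding components_def by blast
  thus "y \<in> W" using \<open>y \<in> A\<close> reach_in[of W E x y] by simp
qed

lemma comp_eq: assumes "sym E" "A \<in> components W E" "x \<in> A"
  shows "A = {y. reachable W E x y}"
proof -
  obtain x0 where x0: "x0 \<in> W" "A = {y. reachable W E x0 y}" using assms(2) unfolding components_def by blast
  have "reachable W E x x0" using reach_sym[OF assms(1)] x0 assms(3) by blast
  have "reachable W E x y \<longleftrightarrow> reachable W E x0 y" for y
    using reach_trans[of W E x x0 y] reach_trans[of W E x0 x y] \<open>reachable W E x x0\<close> x0 assms(3) by auto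
  thus ?thesis using x0 by auto
qed

lemma comp_disj: assumes "sym E" "A \<in> components W E" "B \<in> components W E" "x \<in> A" "x \<in> B"
  shows "A = B"
  using comp_eq[OF assms(1,2,4)] comp_eq[OF assms(1,3,5)] by simp

lemma comp_edge: assumes "graph V E" "A \<in> components (V - {v}) E" "w \<in> A" "(w,u) \<in> E" "u \<noteq> v"
  shows "u \<in> A"
proof -
  have s: "sym E" and EV: "E \<subseteq> V \<times> V" using assms(1) unfolding graph_def by auto
  have A: "A = {y. reachable (V - {v}) E w y}" by (rule comp_eq[OF s assms(2,3)])
  have "reachable (V - {v}) E w w" using assms(2,3) A reach_in by blast
  moreover have "reachable (V-{v}) E w u"
  proof -
    have "walk (V - {v}) E [w, u]" using assms(4,5) EV A reach_in[of "V-{v}" E w w] assms(3)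
      unfolding walk_def by (auto simp: nth_Cons split: nat.splits)
    thus ?thesis unfolding reachable_def by force
  qed
  ultimately show ?thesis using A by blast
qed

lemma comp_exit: assumes "graph V E" "A \<in> components (V - {v}) E"
  shows "walk V E p \<Longrightarrow> hd p \<in> A \<Longrightarrow> last p \<notin> A \<Longrightarrow> v \<in> set p"
proof (induction p)
  case Nil thus ?case by (simp add: walk_def)
next
  case (Cons x rest)
  show ?case
  proof (cases rest)
    case Nil thus ?thesis using Cons.prems by simp
  next
    case (Cons y rest')
    have w: "walk V E rest" "(x, y) \<in> E" using Cons.prems(1) \<open>rest = y # rest'\<close>
      unfolding walk_succ by auto
    show ?thesis
    proof (cases "y \<in> A")
      case True
      hence "v \<in> set rest" using Cons.IH w Cons.prems \<open>rest = y # rest'\<close> by simp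
      thus ?thesis by simp
    next
      case False
      hence "y = v" using comp_edge[OF assms, of x y] Cons.prems w by auto
      thus ?thesis using \<open>rest = y # rest'\<close> by simp
    qed
  qed
qed

lemma comp_dist: assumes "graph V E" "A \<in> components (V - {v}) E" "x \<in> A" "y \<in> V" "y \<notin> A"
  shows "gdist V E x y = gdist V E x v + gdist V E v y"
proof (rule antisym)
  show "gdist V E x y \<le> gdist V E x v + gdist V E v y" by (rule gdist_tri)
  show "gdist V E x v + gdist V E v y \<le> gdist V E x y"
  proof (rule gdist_ge)
    fix p assume p: "walk V E p" "hd p = x" "last p = y"
    hence "v \<in> set p" using comp_exit[OF assms(1,2)] assms by blast
    then obtain ys zs where pe: "p = ys @ v # zs" by (meson split_list)
    have w1: "walk V E (ys @ [v])" using walk_appD(1)[of V E "ys @ [v]" zs] p(1) pe by simp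
    have w2: "walk V E (v # zs)" using walk_appD(2)[of V E ys "v # zs"] p(1) pe by simp
    have "gdist V E x v \<le> enat (length (ys @ [v]) - 1)"
      using gdist_le[OF w1] p pe by (cases ys) auto
    moreover have "gdist V E v y \<le> enat (length (v # zs) - 1)"
      using gdist_le[OF w2] p pe by (cases zs) auto
    ultimately have "gdist V E x v + gdist V E v y \<le> enat (length ys) + enat (length zs)"
      using add_mono by fastforce
    also have "\<dots> = enat (length p - 1)" using pe by simp
    finally show "gdist V E x v + gdist V E v y \<le> enat (length p - 1)" .
  qed
qed

lemma hit_prefix: assumes "graph V E" "A \<in> components (V - {v}) E"
  "walk V E (xs @ [z])" "hd (xs @ [z]) \<notin> A" "z \<in> A"
  shows "v \<in> set xs"
proof -
  have s: "sym E" using assms(1) unfolding graph_def by auto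
  have "walk V E (rev (xs @ [z]))" by (rule walk_rev[OF s assms(3)])
  moreover have "hd (rev (xs @ [z])) \<in> A" "last (rev (xs @ [z])) \<notin> A"
    using assms(4,5) by (cases xs; simp add: last_rev)+
  ultimately have "v \<in> set (rev (xs @ [z]))" using comp_exit[OF assms(1,2)] by blast
  moreover have "z \<noteq> v" using comp_sub[OF assms(2)] assms(5) by blast
  ultimately show ?thesis by auto
qed

lemma hit_suffix: assumes "graph V E" "A \<in> components (V - {v}) E"
  "walk V E (z # zs)" "last (z # zs) \<notin> A" "z \<in> A"
  shows "v \<in> set zs"
proof -
  have "v \<in> set (z # zs)" using comp_exit[OF assms(1,2) assms(3)] assms(4,5) by simp
  moreover have "z \<noteq> v" using comp_sub[OF assms(2)] assms(5) by blast
  ultimately show ?thesis by auto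
qed

lemma shortcut: assumes g: "graph V E" and A: "A \<in> components (V - {v}) E"
  and p: "walk V E p" "hd p \<notin> A" "last p \<notin> A"
  shows "\<exists>q. walk (V - A) E q \<and> hd q = hd p \<and> last q = last p \<and> length q \<le> length p"
proof (cases "set p \<inter> A = {}")
  case True
  hence "walk (V - A) E p" using p(1) unfolding walk_def by auto
  thus ?thesis by blast
next
  case False
  then obtain z where z: "z \<in> set p" "z \<in> A" by blast
  obtain xs ys where pz: "p = xs @ z # ys" using z(1) by (meson split_list)
  have "walk V E (xs @ [z])" using walk_appD(1)[of V E "xs @ [z]" ys] p(1) pz by simp
  moreover have "hd (xs @ [z]) \<notin> A" using p(2) pz z(2) by (cases xs) auto
  ultimately have "v \<in> set xs" using hit_prefix[OF g A] z(2) by blast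
  hence "v \<in> set p" using pz by simp
  then obtain ys1 zs1 where p1: "p = ys1 @ v # zs1" "v \<notin> set ys1" by (meson split_list_first)
  obtain ys2 zs2 where p2: "v # zs1 = ys2 @ v # zs2" "v \<notin> set zs2"
    by (meson list.set_intros(1) split_list_last)
  define q where "q = ys1 @ v # zs2"
  have vA: "v \<notin> A" using comp_sub[OF A] by blast
  have pp: "p = ys1 @ ys2 @ v # zs2" using p1 p2 by simp
  have wpre: "walk V E (ys1 @ [v])" using walk_appD(1)[of V E "ys1 @ [v]" "ys2 @ zs2"] p(1) pp
    by (metis append.assoc append_Cons append_self_conv2 p1(1) snoc_eq_iff_butlast walk_appD(1)) 
  have wsuf: "walk V E (v # zs2)" using walk_appD(2)[of V E "ys1 @ ys2" "v # zs2"] p(1) pp by simp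
  have A1: "set ys1 \<inter> A = {}"
  proof (rule ccontr)
    assume "set ys1 \<inter> A \<noteq> {}"
    then obtain w where w: "w \<in> set ys1" "w \<in> A" by blast
    then obtain a1 a2 where ya: "ys1 = a1 @ w # a2" by (meson split_list)
    have "walk V E (a1 @ [w])" using walk_appD(1)[of V E "a1 @ [w]" "a2 @ v # zs1"] p(1) p1 ya by simp
    moreover have "hd (a1 @ [w]) \<notin> A" using p(2) p1 ya w(2) by (cases a1) auto
    ultimately have "v \<in> set a1" using hit_prefix[OF g A] w(2) by blast
    thus False using p1(2) ya by simp
  qed
  have A2: "set zs2 \<inter> A = {}"
  proof (rule ccontr)
    assume "set zs2 \<inter> A \<noteq> {}"
    then obtain w where w: "w \<in> set zs2" "w \<in> A" by blast
    then obtain a1 a2 where za: "zs2 = a1 @ w # a2" by (meson split_list)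
    have "walk V E (w # a2)" using walk_appD(2)[of V E "ys1 @ ys2 @ v # a1" "w # a2"] p(1) pp za by simp
    moreover have "last (w # a2) \<notin> A" using p(3) pp za by (cases a2) auto
    ultimately have "v \<in> set a2" using hit_suffix[OF g A] w(2) by blast
    thus False using p2(2) za by simp
  qed
  have wq: "walk V E q" unfolding q_def using walk_join[OF wpre wsuf] by simp
  hence "walk (V - A) E q" using A1 A2 vA unfolding walk_def q_def by auto
  moreover have "hd q = hd p" using p1(1) q_def by (cases ys1) auto
  moreover have "last q = last p" using pp q_def by simp
  moreover have "length q \<le> length p" using pp q_def by simp
  ultimately show ?thesis by blast
qed

lemma dist_restrict: assumes g: "graph V E" and A: "A \<in> components (V - {v}) E"
  and xy: "x \<in> V - A" "y \<in> V - A"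
  shows "gdist (V - A) E x y = gdist V E x y"
proof (rule antisym)
  show "gdist (V - A) E x y \<le> gdist V E x y"
  proof (rule gdist_ge)
    fix p assume p: "walk V E p" "hd p = x" "last p = y"
    then obtain q where q: "walk (V - A) E q" "hd q = x" "last q = y" "length q \<le> length p"
      using shortcut[OF g A p(1)] xy by auto
    have "gdist (V - A) E x y \<le> enat (length q - 1)" by (rule gdist_le[OF q(1-3)])
    also have "\<dots> \<le> enat (length p - 1)" using q(4) by simp
    finally show "gdist (V - A) E x y \<le> enat (length p - 1)" .
  qed
  show "gdist V E x y \<le> gdist (V - A) E x y"
  proof (rule gdist_ge)
    fix p assume p: "walk (V - A) E p" "hd p = x" "last p = y"
    show "gdist V E x y \<le> enat (length p - 1)"
      by (rule gdist_le[OF walk_mono[OF p(1)] p(2,3)]) auto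
  qed
qed

definition F3 :: "enat \<Rightarrow> enat \<Rightarrow> enat \<Rightarrow> enat" where
  "F3 x y z = (if x \<le> min y z then enat_absdiff y z
        else if y \<le> min x z then enat_absdiff x z
        else enat_absdiff x y)"

lemma delta4_F3: "delta4 V E a b c d =
  F3 (gdist V E a b + gdist V E c d) (gdist V E a c + gdist V E b d) (gdist V E a d + gdist V E b c)"
  unfolding delta4_def F3_def Let_def by simp

lemma absdiff_sym: "enat_absdiff x y = enat_absdiff y x"
  unfolding enat_absdiff_def by (auto simp: max.commute min.commute)

lemma F3_12: "F3 x y z = F3 y x z"
  unfolding F3_def by (auto simp: absdiff_sym enat_absdiff_def)

lemma F3_23: "F3 x y z = F3 x z y"
  unfolding F3_def by (auto simp: absdiff_sym enat_absdiff_def)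

lemma F3_13: "F3 x y z = F3 z y x"
  by (metis F3_12 F3_23)

lemma F3_zero: "x \<le> y \<Longrightarrow> F3 x y y = 0"
  unfolding F3_def enat_absdiff_def by auto

lemma le_shift: "t \<noteq> \<infinity> \<Longrightarrow> (x + t \<le> y + (t::enat)) = (x \<le> y)"
  by (cases x; cases y; cases t) auto

lemma absdiff_shift: "t \<noteq> \<infinity> \<Longrightarrow> enat_absdiff (x + t) (y + t) = enat_absdiff x y"
  unfolding enat_absdiff_def by (cases x; cases y; cases t) (auto simp: max_def min_def)

lemma F3_shift: "t \<noteq> \<infinity> \<Longrightarrow> F3 (x + t) (y + t) (z + t) = F3 x y z"
  unfolding F3_def by (simp add: le_shift absdiff_shift)

lemma F3_inf: "F3 \<infinity> \<infinity> \<infinity> = 0"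
  unfolding F3_def enat_absdiff_def by simp

context
  fixes V :: "'a set" and E :: "('a \<times> 'a) set"
  assumes s: "sym E"
begin

lemma swap_ab: "delta4 V E a b c d = delta4 V E b a c d"
  unfolding delta4_F3 using gdist_sym[OF s] F3_23 by (metis add.commute)
lemma swap_bc: "delta4 V E a b c d = delta4 V E a c b d"
  unfolding delta4_F3 using gdist_sym[OF s] F3_12 by (metis add.commute)
lemma swap_cd: "delta4 V E a b c d = delta4 V E a b d c"
  unfolding delta4_F3 using gdist_sym[OF s] F3_23 by (metis add.commute)
lemma swap_bd: "delta4 V E a b c d = delta4 V E a d c b"
  unfolding delta4_F3 using gdist_sym[OF s] F3_13 by (metis add.commute)
lemma swap_ad: "delta4 V E a b c d = delta4 V E d b c a"
  unfolding delta4_F3 using gdist_sym[OF s] F3_12 by (metis add.commute)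

end

lemma replace_d: assumes g: "graph V E" and A: "A \<in> components (V - {v}) E"
  and d: "d \<in> A" and abc: "a \<in> V - A" "b \<in> V - A" "c \<in> V - A"
  shows "delta4 V E a b c d \<le> delta4 V E a b c v"
proof -
  have s: "sym E" using g unfolding graph_def by auto
  define t where "t = gdist V E d v"
  have e: "gdist V E x d = gdist V E x v + t" if "x \<in> V - A" for x
    using comp_dist[OF g A d, of x] that gdist_sym[OF s] unfolding t_def
    by (simp add: add.commute)
  have eq: "delta4 V E a b c d = F3 ((gdist V E a b + gdist V E c v) + t)
     ((gdist V E a c + gdist V E b v) + t) ((gdist V E a v + gdist V E b c) + t)"
    unfolding delta4_F3 using e abc by (simp add: ac_simps)
  show ?thesis
  proof (cases "t = \<infinity>")
    case True thus ?thesis using eq F3_inf by simp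
  next
    case False thus ?thesis using eq F3_shift[OF False] by (simp add: delta4_F3)
  qed
qed

lemma pair_zero: assumes g: "graph V E" and A: "A \<in> components (V - {v}) E"
  and B: "B \<in> components (V - {v}) E" and AB: "A \<noteq> B"
  and ab: "a \<in> A" "b \<in> A" and cd: "c \<in> B" "d \<in> B"
  shows "delta4 V E a b c d = 0"
proof -
  have s: "sym E" using g unfolding graph_def by auto
  have nA: "x \<notin> A" if "x \<in> B" for x using comp_disj[OF s A B] that AB by blast
  have BV: "B \<subseteq> V" using comp_sub[OF B] by blast
  have ac: "gdist V E a c = gdist V E a v + gdist V E v c" using comp_dist[OF g A ab(1)] cd BV nA by blast
  have ad: "gdist V E a d = gdist V E a v + gdist V E v d" using comp_dist[OF g A ab(1)] cd BV nA by blast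
  have bc: "gdist V E b c = gdist V E b v + gdist V E v c" using comp_dist[OF g A ab(2)] cd BV nA by blast
  have bd: "gdist V E b d = gdist V E b v + gdist V E v d" using comp_dist[OF g A ab(2)] cd BV nA by blast
  have "gdist V E a b + gdist V E c d \<le> (gdist V E a v + gdist V E v b) + (gdist V E c v + gdist V E v d)"
    by (intro add_mono gdist_tri)
  also have "\<dots> = gdist V E a c + gdist V E b d" using ac bd gdist_sym[OF s] by (simp add: ac_simps)
  finally have le: "gdist V E a b + gdist V E c d \<le> gdist V E a c + gdist V E b d" .
  have "gdist V E a d + gdist V E b c = gdist V E a c + gdist V E b d" using ac bd ad bc by (simp add: ac_simps)
  thus ?thesis unfolding delta4_F3 using F3_zero[OF le] by simp
qed

lemma hyp_upper: "a \<in> W \<Longrightarrow> b \<in> W \<Longrightarrow> c \<in> W \<Longrightarrow> d \<in> W \<Longrightarrow> delta4 W E a b c d \<le> hyperbolicity W E"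
  unfolding hyperbolicity_def by (rule SUP_upper2[of "(a,b,c,d)"]) auto

lemma hyp_attained: assumes "finite V" "V \<noteq> {}"
  shows "\<exists>a\<in>V. \<exists>b\<in>V. \<exists>c\<in>V. \<exists>d\<in>V. hyperbolicity V E = delta4 V E a b c d"
proof -
  let ?f = "\<lambda>q. case q of (a, b, c, d) \<Rightarrow> delta4 V E a b c d"
  let ?S = "?f ` (V \<times> V \<times> V \<times> V)"
  have "finite ?S" "?S \<noteq> {}" using assms by auto
  hence "Sup ?S = Max ?S" by (simp add: Sup_enat_def)
  hence "Sup ?S \<in> ?S" using Max_in[OF \<open>finite ?S\<close> \<open>?S \<noteq> {}\<close>] by simp
  thus ?thesis unfolding hyperbolicity_def by auto
qed

lemma delta4_restrict: assumes g: "graph V E" and A: "A \<in> components (V - {v}) E"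
  and q: "a \<in> V - A" "b \<in> V - A" "c \<in> V - A" "d \<in> V - A"
  shows "delta4 (V - A) E a b c d = delta4 V E a b c d"
  unfolding delta4_def using dist_restrict[OF g A] q by simp

lemma hyp_sub: assumes g: "graph V E" and A: "A \<in> components (V - {v}) E"
  shows "hyperbolicity (V - A) E \<le> hyperbolicity V E"
  unfolding hyperbolicity_def[of "V - A"]
proof (rule SUP_least)
  fix q assume "q \<in> (V - A) \<times> (V - A) \<times> (V - A) \<times> (V - A)"
  then obtain a b c d where q: "q = (a,b,c,d)" "a \<in> V - A" "b \<in> V - A" "c \<in> V - A" "d \<in> V - A"
    by auto
  have "delta4 (V - A) E a b c d = delta4 V E a b c d" by (rule delta4_restrict[OF g A q(2-5)])
  also have "\<dots> \<le> hyperbolicity V E" using q by (intro hyp_upper) auto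
  finally show "(case q of (a, b, c, d) \<Rightarrow> delta4 (V - A) E a b c d) \<le> hyperbolicity V E"
    using q by simp
qed

lemma two_comps: assumes g: "graph V E" and cv: "cut_vertex V E v"
  shows "\<exists>A B. A \<in> components (V - {v}) E \<and> B \<in> components (V - {v}) E \<and> A \<noteq> B"
proof -
  have fin: "finite V" and vV: "v \<in> V" using g cv unfolding graph_def cut_vertex_def by auto
  have "components V E = (\<lambda>x. {y. reachable V E x y}) ` V" unfolding components_def by auto
  hence "finite (components V E)" "components V E \<noteq> {}" using fin vV by auto
  hence "card (components V E) \<ge> 1" by (simp add: Suc_le_eq card_gt_0_iff)
  hence c2: "card (components (V - {v}) E) \<ge> 2" using cv unfolding cut_vertex_def by simp
  hence "components (V - {v}) E \<noteq> {}" by auto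
  then obtain A where A: "A \<in> components (V - {v}) E" by blast
  have "components (V - {v}) E \<noteq> {A}" using c2 by auto
  then obtain B where "B \<in> components (V - {v}) E" "B \<noteq> A" using A by blast
  thus ?thesis using A by blast
qed

theorem lemma3:
  fixes V :: "'a set" and E :: "('a \<times> 'a) set" and v :: 'a
  assumes "graph V E"
    and "card V > 4"
    and "cut_vertex V E v"
  shows "\<exists>A \<in> components (V - {v}) E. hyperbolicity V E = hyperbolicity (V - A) E"
proof -
  note g = assms(1)
  let ?C = "components (V - {v}) E"
  have s: "sym E" and fin: "finite V" using g unfolding graph_def by auto
  have vV: "v \<in> V" using assms(3) unfolding cut_vertex_def by auto
  obtain A0 B0 where AB0: "A0 \<in> ?C" "B0 \<in> ?C" "A0 \<noteq> B0" using two_comps[OF g assms(3)] by blast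
  obtain a b c d where q: "a \<in> V" "b \<in> V" "c \<in> V" "d \<in> V" and hq: "hyperbolicity V E = delta4 V E a b c d"
    using hyp_attained[OF fin, of E] vV by blast
  have vA: "v \<in> V - A" if "A \<in> ?C" for A using comp_sub[OF that] vV by blast
  have key: "\<exists>A \<in> ?C. delta4 V E a b c d \<le> hyperbolicity (V - A) E"
  proof -
    consider (c1) A where "A \<in> ?C" "a \<notin> A" "b \<notin> A" "c \<notin> A" "d \<notin> A"
      | (cd) A where "A \<in> ?C" "a \<notin> A" "b \<notin> A" "c \<notin> A" "d \<in> A"
      | (cc) A where "A \<in> ?C" "a \<notin> A" "b \<notin> A" "c \<in> A" "d \<notin> A"
      | (cb) A where "A \<in> ?C" "a \<notin> A" "b \<in> A" "c \<notin> A" "d \<notin> A"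
      | (ca) A where "A \<in> ?C" "a \<in> A" "b \<notin> A" "c \<notin> A" "d \<notin> A"
      | (zero) "delta4 V E a b c d = 0"
    proof -
      assume h1: "\<And>A. A \<in> ?C \<Longrightarrow> a \<notin> A \<Longrightarrow> b \<notin> A \<Longrightarrow> c \<notin> A \<Longrightarrow> d \<notin> A \<Longrightarrow> thesis"
        and h2: "\<And>A. A \<in> ?C \<Longrightarrow> a \<notin> A \<Longrightarrow> b \<notin> A \<Longrightarrow> c \<notin> A \<Longrightarrow> d \<in> A \<Longrightarrow> thesis"
        and h3: "\<And>A. A \<in> ?C \<Longrightarrow> a \<notin> A \<Longrightarrow> b \<notin> A \<Longrightarrow> c \<in> A \<Longrightarrow> d \<notin> A \<Longrightarrow> thesis"
        and h4: "\<And>A. A \<in> ?C \<Longrightarrow> a \<notin> A \<Longrightarrow> b \<in> A \<Longrightarrow> c \<notin> A \<Longrightarrow> d \<notin> A \<Longrightarrow> thesis"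
        and h5: "\<And>A. A \<in> ?C \<Longrightarrow> a \<in> A \<Longrightarrow> b \<notin> A \<Longrightarrow> c \<notin> A \<Longrightarrow> d \<notin> A \<Longrightarrow> thesis"
        and h6: "delta4 V E a b c d = 0 \<Longrightarrow> thesis"
      show thesis
      proof (rule ccontr)
        assume nt: "\<not> thesis"
        have dis: "x \<notin> B0" if "x \<in> A0" for x using comp_disj[OF s AB0(1,2)] AB0(3) that by blast
        have PA: "(a \<in> A0 \<or> b \<in> A0 \<or> c \<in> A0 \<or> d \<in> A0) \<and>
             \<not> (a \<notin> A0 \<and> b \<notin> A0 \<and> c \<notin> A0 \<and> d \<in> A0) \<and> \<not> (a \<notin> A0 \<and> b \<notin> A0 \<and> c \<in> A0 \<and> d \<notin> A0) \<and>
             \<not> (a \<notin> A0 \<and> b \<in> A0 \<and> c \<notin> A0 \<and> d \<notin> A0) \<and> \<not> (a \<in> A0 \<and> b \<notin> A0 \<and> c \<notin> A0 \<and> d \<notin> A0)"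
          using h1[OF AB0(1)] h2[OF AB0(1)] h3[OF AB0(1)] h4[OF AB0(1)] h5[OF AB0(1)] nt by blast
        have PB: "(a \<in> B0 \<or> b \<in> B0 \<or> c \<in> B0 \<or> d \<in> B0) \<and>
             \<not> (a \<notin> B0 \<and> b \<notin> B0 \<and> c \<notin> B0 \<and> d \<in> B0) \<and> \<not> (a \<notin> B0 \<and> b \<notin> B0 \<and> c \<in> B0 \<and> d \<notin> B0) \<and>
             \<not> (a \<notin> B0 \<and> b \<in> B0 \<and> c \<notin> B0 \<and> d \<notin> B0) \<and> \<not> (a \<in> B0 \<and> b \<notin> B0 \<and> c \<notin> B0 \<and> d \<notin> B0)"
          using h1[OF AB0(2)] h2[OF AB0(2)] h3[OF AB0(2)] h4[OF AB0(2)] h5[OF AB0(2)] nt by blast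
        have dd: "a \<in> A0 \<longrightarrow> a \<notin> B0" "b \<in> A0 \<longrightarrow> b \<notin> B0" "c \<in> A0 \<longrightarrow> c \<notin> B0" "d \<in> A0 \<longrightarrow> d \<notin> B0"
          using dis by auto
        have six: "(a \<in> A0 \<and> b \<in> A0 \<and> c \<in> B0 \<and> d \<in> B0) \<or> (a \<in> B0 \<and> b \<in> B0 \<and> c \<in> A0 \<and> d \<in> A0)
          \<or> (a \<in> A0 \<and> c \<in> A0 \<and> b \<in> B0 \<and> d \<in> B0) \<or> (a \<in> B0 \<and> c \<in> B0 \<and> b \<in> A0 \<and> d \<in> A0)
          \<or> (a \<in> A0 \<and> d \<in> A0 \<and> b \<in> B0 \<and> c \<in> B0) \<or> (a \<in> B0 \<and> d \<in> B0 \<and> b \<in> A0 \<and> c \<in> A0)"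
          using PA PB dd by argo
        have "delta4 V E a b c d = 0"
          using six
        proof (elim disjE conjE)
          assume "a \<in> A0" "b \<in> A0" "c \<in> B0" "d \<in> B0"
          thus ?thesis using pair_zero[OF g AB0(1,2,3)] by simp
        next
          assume "a \<in> B0" "b \<in> B0" "c \<in> A0" "d \<in> A0"
          thus ?thesis using pair_zero[OF g AB0(2,1) AB0(3)[symmetric]] by simp
        next
          assume "a \<in> A0" "c \<in> A0" "b \<in> B0" "d \<in> B0"
          thus ?thesis using pair_zero[OF g AB0(1,2,3), of a c b d] swap_bc[OF s, of V a b c d] by simp
        next
          assume "a \<in> B0" "c \<in> B0" "b \<in> A0" "d \<in> A0"
          thus ?thesis using pair_zero[OF g AB0(2,1) AB0(3)[symmetric], of a c b d] swap_bc[OF s, of V a b c d] by simp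
        next
          assume "a \<in> A0" "d \<in> A0" "b \<in> B0" "c \<in> B0"
          thus ?thesis using pair_zero[OF g AB0(1,2,3), of a d c b] swap_bd[OF s, of V a b c d] by simp
        next
          assume "a \<in> B0" "d \<in> B0" "b \<in> A0" "c \<in> A0"
          thus ?thesis using pair_zero[OF g AB0(2,1) AB0(3)[symmetric], of a d c b] swap_bd[OF s, of V a b c d] by simp
        qed
        thus False using h6 nt by blast
      qed
    qed
    thus ?thesis
    proof cases
      case (c1 A)
      hence qa: "a \<in> V - A" "b \<in> V - A" "c \<in> V - A" "d \<in> V - A" using q c1(2-5) by simp_all
      have "delta4 V E a b c d = delta4 (V - A) E a b c d" using delta4_restrict[OF g c1(1) qa] by simp
      also have "\<dots> \<le> hyperbolicity (V - A) E" using qa by (intro hyp_upper) auto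
      finally show ?thesis using c1(1) by (intro bexI)
    next
      case (cd A)
      hence qa: "a \<in> V - A" "b \<in> V - A" "c \<in> V - A" "v \<in> V - A" using q cd(2-5) vA[OF cd(1)] by simp_all
      have "delta4 V E a b c d \<le> delta4 V E a b c v" using replace_d[OF g cd(1) cd(5) qa(1-3)] .
      also have "\<dots> = delta4 (V - A) E a b c v" using delta4_restrict[OF g cd(1) qa] by simp
      also have "\<dots> \<le> hyperbolicity (V - A) E" using qa by (intro hyp_upper) auto
      finally show ?thesis using cd(1) by (intro bexI)
    next
      case (cc A)
      hence qa: "a \<in> V - A" "b \<in> V - A" "d \<in> V - A" "v \<in> V - A" using q cc(2-5) vA[OF cc(1)] by simp_all
      have "delta4 V E a b c d = delta4 V E a b d c" by (rule swap_cd[OF s])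
      also have "\<dots> \<le> delta4 V E a b d v" using replace_d[OF g cc(1) cc(4) qa(1-3)] .
      also have "\<dots> = delta4 (V - A) E a b d v" using delta4_restrict[OF g cc(1) qa] by simp
      also have "\<dots> \<le> hyperbolicity (V - A) E" using qa by (intro hyp_upper) auto
      finally show ?thesis using cc(1) by (intro bexI)
    next
      case (cb A)
      hence qa: "a \<in> V - A" "d \<in> V - A" "c \<in> V - A" "v \<in> V - A" using q cb(2-5) vA[OF cb(1)] by simp_all
      have "delta4 V E a b c d = delta4 V E a d c b" by (rule swap_bd[OF s])
      also have "\<dots> \<le> delta4 V E a d c v" using replace_d[OF g cb(1) cb(3) qa(1-3)] .
      also have "\<dots> = delta4 (V - A) E a d c v" using delta4_restrict[OF g cb(1) qa] by simp
      also have "\<dots> \<le> hyperbolicity (V - A) E" using qa by (intro hyp_upper) auto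
      finally show ?thesis using cb(1) by (intro bexI)
    next
      case (ca A)
      hence qa: "d \<in> V - A" "b \<in> V - A" "c \<in> V - A" "v \<in> V - A" using q ca(2-5) vA[OF ca(1)] by simp_all
      have "delta4 V E a b c d = delta4 V E d b c a" by (rule swap_ad[OF s])
      also have "\<dots> \<le> delta4 V E d b c v" using replace_d[OF g ca(1) ca(2) qa(1-3)] .
      also have "\<dots> = delta4 (V - A) E d b c v" using delta4_restrict[OF g ca(1) qa] by simp
      also have "\<dots> \<le> hyperbolicity (V - A) E" using qa by (intro hyp_upper) auto
      finally show ?thesis using ca(1) by (intro bexI)
    next
      case zero
      show ?thesis using AB0(1) zero by (intro bexI) simp_all
    qed
  qed
  then obtain A where A: "A \<in> ?C" "delta4 V E a b c d \<le> hyperbolicity (V - A) E" by blast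
  have "hyperbolicity V E = hyperbolicity (V - A) E"
    using hyp_sub[OF g A(1)] A(2) hq by simp
  thus ?thesis using A(1) by blast
qed

end
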